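(* Let $R$ be a ring and let $A$ be a left localization of $R$, i.e. $A=S'^{-1}R$ for some $S'\in\mathrm{Den}_l(R,\mathfrak a)$, $\mathfrak a\in\mathrm{Ass}_l(R)$. Then $A$ is a maximal left quotient ring of $R$ if and only if $Q_l(A)=A$ and $\mathrm{Ass}_l(A)=\{0\}$, i.e. $A$ is a left localization maximal ring.
   Context: Rings are associative with $1$. A multiplicatively closed subset $S$ ($1\in S$, $0\notin S$) is a left Ore set if $Sr\cap Rs\ne\emptyset$ for all $r\in R,s\in S$; $\mathrm{ass}(S):=\{r\mid sr=0\text{ for some }s\in S\}$; it is a left denominator set if moreover $rs=0$ ($s\in S$) implies $tr=0$ for some $t\in S$. $\mathrm{Den}_l(R)$ is the set of left denominator sets, $\mathrm{Ass}_l(R)=\{\mathrm{ass}(S)\mid S\in\mathrm{Den}_l(R)\}$, $\mathrm{Den}_l(R,\mathfrak a)=\{S\mid\mathrm{ass}(S)=\mathfrak a\}$. The left localizations $S^{-1}R$, $S\in\mathrm{Den}_l(R)$, form a poset in which $S_1^{-1}R\to S_2^{-1}R$ whenever $S_1\subseteq S_2$ (via the natural map $s^{-1}r\mapsto s^{-1}r$); its maximal elements, the maximal left quotient rings of $R$, are exactly the rings $S^{-1}R$ with $S$ a maximal element of $(\mathrm{Den}_l(R),\subseteq)$. For a ring $B$, $Q_l(B):=S_0(B)^{-1}B$ where $S_0(B)$ is the largest element of $\mathrm{Den}_l(B,0)$. A ring $B$ is a left localization maximal ring if $Q_l(B)=B$ and $\mathrm{Ass}_l(B)=\{0\}$. 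*)

theory Defs
  imports "HOL-Algebra.Ring" "HOL-Algebra.RingHom"
begin

definition mult_closed :: "('a, 'm) ring_scheme \<Rightarrow> 'a set \<Rightarrow> bool" where
  "mult_closed R S \<longleftrightarrow> S \<subseteq> carrier R \<and> \<one>\<^bsub>R\<^esub> \<in> S \<and> \<zero>\<^bsub>R\<^esub> \<notin> S \<and>
     (\<forall>s\<in>S. \<forall>t\<in>S. s \<otimes>\<^bsub>R\<^esub> t \<in> S)"

definition left_ore :: "('a, 'm) ring_scheme \<Rightarrow> 'a set \<Rightarrow> bool" where
  "left_ore R S \<longleftrightarrow> mult_closed R S \<and>
     (\<forall>r\<in>carrier R. \<forall>s\<in>S. \<exists>s'\<in>S. \<exists>r'\<in>carrier R. s' \<otimes>\<^bsub>R\<^esub> r = r' \<otimes>\<^bsub>R\<^esub> s)"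

definition ass :: "('a, 'm) ring_scheme \<Rightarrow> 'a set \<Rightarrow> 'a set" where
  "ass R S = {r \<in> carrier R. \<exists>s\<in>S. s \<otimes>\<^bsub>R\<^esub> r = \<zero>\<^bsub>R\<^esub>}"

definition left_den :: "('a, 'm) ring_scheme \<Rightarrow> 'a set \<Rightarrow> bool" where
  "left_den R S \<longleftrightarrow> left_ore R S \<and>
     (\<forall>r\<in>carrier R. \<forall>s\<in>S. r \<otimes>\<^bsub>R\<^esub> s = \<zero>\<^bsub>R\<^esub> \<longrightarrow> (\<exists>t\<in>S. t \<otimes>\<^bsub>R\<^esub> r = \<zero>\<^bsub>R\<^esub>))"

definition Den_l :: "('a, 'm) ring_scheme \<Rightarrow> 'a set set" where
  "Den_l R = {S. left_den R S}"

definition Ass_l :: "('a, 'm) ring_scheme \<Rightarrow> 'a set set" where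
  "Ass_l R = ass R ` Den_l R"

definition Den_l_at :: "('a, 'm) ring_scheme \<Rightarrow> 'a set \<Rightarrow> 'a set set" where
  "Den_l_at R \<aa> = {S \<in> Den_l R. ass R S = \<aa>}"

text \<open>(A, sigma) is a left localization S^{-1}R of R at S (left ring of fractions),
  given by the standard defining properties: sigma is a ring homomorphism,
  sigma(S) consists of units, every element is sigma(s)^{-1} sigma(r), and
  the kernel of sigma is ass(S). This determines S^{-1}R up to a unique
  isomorphism over R.\<close>
definition is_left_localization ::
  "('a, 'm) ring_scheme \<Rightarrow> 'a set \<Rightarrow> ('b, 'n) ring_scheme \<Rightarrow> ('a \<Rightarrow> 'b) \<Rightarrow> bool" where
  "is_left_localization R S A \<sigma> \<longleftrightarrow>
     ring A \<and> \<sigma> \<in> ring_hom R A \<and>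
     (\<forall>s\<in>S. \<sigma> s \<in> Units A) \<and>
     (\<forall>a\<in>carrier A. \<exists>s\<in>S. \<exists>r\<in>carrier R. a = inv\<^bsub>A\<^esub> (\<sigma> s) \<otimes>\<^bsub>A\<^esub> \<sigma> r) \<and>
     {r \<in> carrier R. \<sigma> r = \<zero>\<^bsub>A\<^esub>} = ass R S"

definition maximal_den :: "('a, 'm) ring_scheme \<Rightarrow> 'a set \<Rightarrow> bool" where
  "maximal_den R S \<longleftrightarrow> S \<in> Den_l R \<and> (\<forall>T\<in>Den_l R. S \<subseteq> T \<longrightarrow> T = S)"

definition max_left_quotient_ring ::
  "('a, 'm) ring_scheme \<Rightarrow> ('b, 'n) ring_scheme \<Rightarrow> ('a \<Rightarrow> 'b) \<Rightarrow> bool" where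
  "max_left_quotient_ring R A \<sigma> \<longleftrightarrow>
     (\<exists>S. maximal_den R S \<and> is_left_localization R S A \<sigma>)"

text \<open>Q_l(B) = B: with S_0(B) the largest element of Den_l(B,0), the natural map
  B -> S_0(B)^{-1}B (the identity) realizes the localization.\<close>
definition Ql_eq_self :: "('b, 'n) ring_scheme \<Rightarrow> bool" where
  "Ql_eq_self B \<longleftrightarrow>
     (\<exists>S0. S0 \<in> Den_l_at B {\<zero>\<^bsub>B\<^esub>} \<and> (\<forall>T\<in>Den_l_at B {\<zero>\<^bsub>B\<^esub>}. T \<subseteq> S0) \<and>
           is_left_localization B S0 B id)"

definition left_localization_maximal :: "('b, 'n) ring_scheme \<Rightarrow> bool" where
  "left_localization_maximal B \<longleftrightarrow> Ql_eq_self B \<and> Ass_l B = {{\<zero>\<^bsub>B\<^esub>}}"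

end

theory Submission imports Defs begin

lemma loc_hom:
  assumes "ring R" "is_left_localization R S A \<sigma>"
  shows "ring_hom_ring R A \<sigma>"
  using assms unfolding is_left_localization_def
  by (simp add: ring_hom_ring.intro ring_hom_ring_axioms.intro)

lemma loc_eq:
  assumes R: "ring R" and L: "is_left_localization R S A \<sigma>" and SR: "S \<subseteq> carrier R"
    and a: "a \<in> carrier R" and b: "b \<in> carrier R" and e: "\<sigma> a = \<sigma> b"
  shows "\<exists>v\<in>S. v \<otimes>\<^bsub>R\<^esub> a = v \<otimes>\<^bsub>R\<^esub> b"
proof -
  interpret h: ring_hom_ring R A \<sigma> using loc_hom[OF R L] .
  have "\<sigma> (a \<oplus>\<^bsub>R\<^esub> \<ominus>\<^bsub>R\<^esub> b) = \<zero>\<^bsub>A\<^esub>"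
    using a b e by (simp add: h.S.r_neg)
  hence "a \<oplus>\<^bsub>R\<^esub> \<ominus>\<^bsub>R\<^esub> b \<in> ass R S" using L a b unfolding is_left_localization_def by blast
  then obtain v where v: "v \<in> S" "v \<otimes>\<^bsub>R\<^esub> (a \<oplus>\<^bsub>R\<^esub> \<ominus>\<^bsub>R\<^esub> b) = \<zero>\<^bsub>R\<^esub>" unfolding ass_def by blast
  have vc: "v \<in> carrier R" using v(1) SR by blast
  have "v \<otimes>\<^bsub>R\<^esub> a \<oplus>\<^bsub>R\<^esub> \<ominus>\<^bsub>R\<^esub> (v \<otimes>\<^bsub>R\<^esub> b) = \<zero>\<^bsub>R\<^esub>"
    using v(2) vc a b by (simp add: h.R.r_distr h.R.r_minus)
  hence "v \<otimes>\<^bsub>R\<^esub> a = v \<otimes>\<^bsub>R\<^esub> b" using vc a b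
    by (metis h.R.add.inv_closed h.R.add.m_closed h.R.m_closed h.R.minus_equality h.R.minus_minus h.R.add.m_comm)
  thus ?thesis using v(1) by blast
qed

lemma unit_eq:
  fixes A (structure)
  assumes "monoid A" "u \<in> Units A" "a \<in> carrier A" "c \<in> carrier A"
  shows "(a = inv\<^bsub>A\<^esub> u \<otimes>\<^bsub>A\<^esub> c) = (u \<otimes>\<^bsub>A\<^esub> a = c)"
proof -
  interpret monoid A by fact
  show ?thesis
  proof
    assume "a = inv u \<otimes> c"
    thus "u \<otimes> a = c" using assms by (simp add: m_assoc[symmetric] Units_closed)
  next
    assume e: "u \<otimes> a = c"
    have "a = (inv u \<otimes> u) \<otimes> a" using assms by simp
    also have "\<dots> = inv u \<otimes> (u \<otimes> a)" using assms(2,3) by (intro m_assoc) auto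
    also have "\<dots> = inv u \<otimes> c" using e by simp
    finally show "a = inv u \<otimes> c" .
  qed
qed

lemma loc_nonzero:
  assumes R: "ring R" and L: "is_left_localization R S A \<sigma>" and M: "mult_closed R S"
  shows "\<one>\<^bsub>A\<^esub> \<noteq> \<zero>\<^bsub>A\<^esub>"
proof
  assume e: "\<one>\<^bsub>A\<^esub> = \<zero>\<^bsub>A\<^esub>"
  interpret h: ring_hom_ring R A \<sigma> using loc_hom[OF R L] .
  have "\<one>\<^bsub>R\<^esub> \<in> ass R S" using L e unfolding is_left_localization_def by auto
  then obtain s where "s \<in> S" "s \<otimes>\<^bsub>R\<^esub> \<one>\<^bsub>R\<^esub> = \<zero>\<^bsub>R\<^esub>" unfolding ass_def by auto
  thus False using M unfolding mult_closed_def by auto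
qed

lemma fwd_units:
  assumes R: "ring R" and Mx: "maximal_den R S" and L: "is_left_localization R S A \<sigma>"
    and T: "T \<in> Den_l A"
  shows "T \<subseteq> Units A"
proof -
  interpret h: ring_hom_ring R A \<sigma> using loc_hom[OF R L] .
  have SD: "left_den R S" using Mx unfolding maximal_den_def Den_l_def by auto
  have SR: "S \<subseteq> carrier R" using SD unfolding left_den_def left_ore_def mult_closed_def by auto
  have Su: "\<And>s. s \<in> S \<Longrightarrow> \<sigma> s \<in> Units A" using L unfolding is_left_localization_def by auto
  have rep: "\<And>a. a \<in> carrier A \<Longrightarrow> \<exists>s\<in>S. \<exists>r\<in>carrier R. a = inv\<^bsub>A\<^esub> (\<sigma> s) \<otimes>\<^bsub>A\<^esub> \<sigma> r"
    using L unfolding is_left_localization_def by auto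
  have TA: "T \<subseteq> carrier A" and T1: "\<one>\<^bsub>A\<^esub> \<in> T" and T0: "\<zero>\<^bsub>A\<^esub> \<notin> T"
    and Tm: "\<And>s t. s \<in> T \<Longrightarrow> t \<in> T \<Longrightarrow> s \<otimes>\<^bsub>A\<^esub> t \<in> T"
    and Tore: "\<And>a t. a \<in> carrier A \<Longrightarrow> t \<in> T \<Longrightarrow> \<exists>t'\<in>T. \<exists>a'\<in>carrier A. t' \<otimes>\<^bsub>A\<^esub> a = a' \<otimes>\<^bsub>A\<^esub> t"
    and Trev: "\<And>a t. a \<in> carrier A \<Longrightarrow> t \<in> T \<Longrightarrow> a \<otimes>\<^bsub>A\<^esub> t = \<zero>\<^bsub>A\<^esub> \<Longrightarrow> \<exists>t'\<in>T. t' \<otimes>\<^bsub>A\<^esub> a = \<zero>\<^bsub>A\<^esub>"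
    using T unfolding Den_l_def left_den_def left_ore_def mult_closed_def by blast+
  define W where "W = {r \<in> carrier R. (\<exists>b\<in>carrier A. b \<otimes>\<^bsub>A\<^esub> \<sigma> r \<in> T) \<and>
      (\<forall>x\<in>carrier A. x \<otimes>\<^bsub>A\<^esub> \<sigma> r = \<zero>\<^bsub>A\<^esub> \<longrightarrow> (\<exists>t\<in>T. t \<otimes>\<^bsub>A\<^esub> x = \<zero>\<^bsub>A\<^esub>))}"
  have G: "z \<in> W" if z: "z \<in> carrier R" and u: "u \<in> Units A" and t: "t \<in> T"
      and e: "\<sigma> z = u \<otimes>\<^bsub>A\<^esub> t" for z u t
  proof -
    have uc: "u \<in> carrier A" and tc: "t \<in> carrier A" using u t TA by auto
    have "inv\<^bsub>A\<^esub> u \<otimes>\<^bsub>A\<^esub> \<sigma> z = t" using e u tc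
      unit_eq[of A u t "\<sigma> z"] uc z by (simp add: h.S.monoid_axioms)
    moreover have "\<exists>t'\<in>T. t' \<otimes>\<^bsub>A\<^esub> x = \<zero>\<^bsub>A\<^esub>"
      if x: "x \<in> carrier A" "x \<otimes>\<^bsub>A\<^esub> \<sigma> z = \<zero>\<^bsub>A\<^esub>" for x
    proof -
      have "(x \<otimes>\<^bsub>A\<^esub> u) \<otimes>\<^bsub>A\<^esub> t = \<zero>\<^bsub>A\<^esub>" using x e uc tc by (simp add: h.S.m_assoc)
      then obtain t' where t': "t' \<in> T" "t' \<otimes>\<^bsub>A\<^esub> (x \<otimes>\<^bsub>A\<^esub> u) = \<zero>\<^bsub>A\<^esub>"
        using Trev[of "x \<otimes>\<^bsub>A\<^esub> u" t] x uc t by auto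
      have t'c: "t' \<in> carrier A" using t' TA by auto
      have "t' \<otimes>\<^bsub>A\<^esub> x = (t' \<otimes>\<^bsub>A\<^esub> (x \<otimes>\<^bsub>A\<^esub> u)) \<otimes>\<^bsub>A\<^esub> inv\<^bsub>A\<^esub> u"
        using t'c x uc u by (simp add: h.S.m_assoc)
      also have "\<dots> = \<zero>\<^bsub>A\<^esub>" using t'(2) u by simp
      finally show ?thesis using t' by blast
    qed
    moreover have "inv\<^bsub>A\<^esub> u \<in> carrier A" using u by simp
    ultimately show ?thesis unfolding W_def using z t
      by (intro CollectI conjI bexI[of _ "inv\<^bsub>A\<^esub> u"]) simp_all
  qed
  have SW: "S \<subseteq> W"
  proof
    fix s assume s: "s \<in> S"
    have "s \<in> carrier R" using s SR by blast
    moreover have "\<sigma> s = \<sigma> s \<otimes>\<^bsub>A\<^esub> \<one>\<^bsub>A\<^esub>" using calculation by simp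
    ultimately show "s \<in> W" using G[of s "\<sigma> s" "\<one>\<^bsub>A\<^esub>"] s Su T1 by blast
  qed
  have WR: "W \<subseteq> carrier R" unfolding W_def by auto
  have W1: "\<one>\<^bsub>R\<^esub> \<in> W" using G[of "\<one>\<^bsub>R\<^esub>" "\<one>\<^bsub>A\<^esub>" "\<one>\<^bsub>A\<^esub>"] T1 by simp
  have W0: "\<zero>\<^bsub>R\<^esub> \<notin> W"
  proof
    assume "\<zero>\<^bsub>R\<^esub> \<in> W"
    then obtain b where "b \<in> carrier A" "b \<otimes>\<^bsub>A\<^esub> \<sigma> \<zero>\<^bsub>R\<^esub> \<in> T" unfolding W_def by auto
    thus False using T0 by simp
  qed
  have Wm: "w1 \<otimes>\<^bsub>R\<^esub> w2 \<in> W" if w1: "w1 \<in> W" and w2: "w2 \<in> W" for w1 w2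
  proof -
    obtain b1 where b1: "b1 \<in> carrier A" "b1 \<otimes>\<^bsub>A\<^esub> \<sigma> w1 \<in> T" using w1 unfolding W_def by auto
    obtain b2 where b2: "b2 \<in> carrier A" "b2 \<otimes>\<^bsub>A\<^esub> \<sigma> w2 \<in> T" using w2 unfolding W_def by auto
    have c1: "w1 \<in> carrier R" "w2 \<in> carrier R" using w1 w2 WR by auto
    obtain t3 c where tc: "t3 \<in> T" "c \<in> carrier A" "t3 \<otimes>\<^bsub>A\<^esub> b2 = c \<otimes>\<^bsub>A\<^esub> (b1 \<otimes>\<^bsub>A\<^esub> \<sigma> w1)"
      using Tore[OF b2(1) b1(2)] by auto
    have t3c: "t3 \<in> carrier A" using tc TA by auto
    have "(c \<otimes>\<^bsub>A\<^esub> b1) \<otimes>\<^bsub>A\<^esub> \<sigma> (w1 \<otimes>\<^bsub>R\<^esub> w2) = (c \<otimes>\<^bsub>A\<^esub> (b1 \<otimes>\<^bsub>A\<^esub> \<sigma> w1)) \<otimes>\<^bsub>A\<^esub> \<sigma> w2"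
      using c1 b1 tc by (simp add: h.S.m_assoc)
    also have "\<dots> = t3 \<otimes>\<^bsub>A\<^esub> (b2 \<otimes>\<^bsub>A\<^esub> \<sigma> w2)" using tc t3c b1 b2 c1 by (simp add: h.S.m_assoc[symmetric])
    also have "\<dots> \<in> T" using Tm tc(1) b2(2) by auto
    finally have P1: "(c \<otimes>\<^bsub>A\<^esub> b1) \<otimes>\<^bsub>A\<^esub> \<sigma> (w1 \<otimes>\<^bsub>R\<^esub> w2) \<in> T" .
    have P2: "\<exists>t\<in>T. t \<otimes>\<^bsub>A\<^esub> x = \<zero>\<^bsub>A\<^esub>"
      if x: "x \<in> carrier A" "x \<otimes>\<^bsub>A\<^esub> \<sigma> (w1 \<otimes>\<^bsub>R\<^esub> w2) = \<zero>\<^bsub>A\<^esub>" for x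
    proof -
      have "(x \<otimes>\<^bsub>A\<^esub> \<sigma> w1) \<otimes>\<^bsub>A\<^esub> \<sigma> w2 = \<zero>\<^bsub>A\<^esub>" using x c1 by (simp add: h.S.m_assoc)
      then obtain t2 where t2: "t2 \<in> T" "t2 \<otimes>\<^bsub>A\<^esub> (x \<otimes>\<^bsub>A\<^esub> \<sigma> w1) = \<zero>\<^bsub>A\<^esub>"
        using w2 x c1 unfolding W_def by auto
      have t2c: "t2 \<in> carrier A" using t2 TA by auto
      have "(t2 \<otimes>\<^bsub>A\<^esub> x) \<otimes>\<^bsub>A\<^esub> \<sigma> w1 = \<zero>\<^bsub>A\<^esub>" using t2 t2c x c1 by (simp add: h.S.m_assoc)
      then obtain t1 where t1: "t1 \<in> T" "t1 \<otimes>\<^bsub>A\<^esub> (t2 \<otimes>\<^bsub>A\<^esub> x) = \<zero>\<^bsub>A\<^esub>"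
        using w1 x t2c unfolding W_def by auto
      have t1c: "t1 \<in> carrier A" using t1 TA by auto
      have "(t1 \<otimes>\<^bsub>A\<^esub> t2) \<otimes>\<^bsub>A\<^esub> x = \<zero>\<^bsub>A\<^esub>" using t1 t1c t2c x by (simp add: h.S.m_assoc)
      thus ?thesis using Tm t1(1) t2(1) by blast
    qed
    have "c \<otimes>\<^bsub>A\<^esub> b1 \<in> carrier A" using tc b1 by simp
    thus ?thesis unfolding W_def using P1 P2 c1 by blast
  qed
  have Wore: "\<exists>w'\<in>W. \<exists>r'\<in>carrier R. w' \<otimes>\<^bsub>R\<^esub> r = r' \<otimes>\<^bsub>R\<^esub> w"
    if r: "r \<in> carrier R" and w: "w \<in> W" for r w
  proof -
    obtain b where b: "b \<in> carrier A" "b \<otimes>\<^bsub>A\<^esub> \<sigma> w \<in> T" using w unfolding W_def by auto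
    have wc: "w \<in> carrier R" using w WR by auto
    obtain t' a' where ta: "t' \<in> T" "a' \<in> carrier A" "t' \<otimes>\<^bsub>A\<^esub> \<sigma> r = a' \<otimes>\<^bsub>A\<^esub> (b \<otimes>\<^bsub>A\<^esub> \<sigma> w)"
      using Tore[OF _ b(2), of "\<sigma> r"] r by auto
    have t'c: "t' \<in> carrier A" using ta TA by auto
    obtain s x where sx: "s \<in> S" "x \<in> carrier R" "a' \<otimes>\<^bsub>A\<^esub> b = inv\<^bsub>A\<^esub> (\<sigma> s) \<otimes>\<^bsub>A\<^esub> \<sigma> x"
      using rep[of "a' \<otimes>\<^bsub>A\<^esub> b"] ta b by auto
    have sc: "s \<in> carrier R" using sx SR by auto
    have ex: "\<sigma> s \<otimes>\<^bsub>A\<^esub> (a' \<otimes>\<^bsub>A\<^esub> b) = \<sigma> x"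
      using unit_eq[of A "\<sigma> s" "a' \<otimes>\<^bsub>A\<^esub> b" "\<sigma> x"] sx Su ta b h.S.monoid_axioms by auto
    obtain s2 y where sy: "s2 \<in> S" "y \<in> carrier R" "\<sigma> s \<otimes>\<^bsub>A\<^esub> t' = inv\<^bsub>A\<^esub> (\<sigma> s2) \<otimes>\<^bsub>A\<^esub> \<sigma> y"
      using rep[of "\<sigma> s \<otimes>\<^bsub>A\<^esub> t'"] t'c sc by auto
    have s2c: "s2 \<in> carrier R" using sy SR by auto
    have ey: "\<sigma> s2 \<otimes>\<^bsub>A\<^esub> (\<sigma> s \<otimes>\<^bsub>A\<^esub> t') = \<sigma> y"
      using unit_eq[of A "\<sigma> s2" "\<sigma> s \<otimes>\<^bsub>A\<^esub> t'" "\<sigma> y"] sy Su t'c sc h.S.monoid_axioms by auto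
    have ac: "a' \<in> carrier A" "b \<in> carrier A" using ta b by auto
    have "\<sigma> (y \<otimes>\<^bsub>R\<^esub> r) = \<sigma> y \<otimes>\<^bsub>A\<^esub> \<sigma> r" using sy(2) r by simp
    also have "\<dots> = (\<sigma> s2 \<otimes>\<^bsub>A\<^esub> (\<sigma> s \<otimes>\<^bsub>A\<^esub> t')) \<otimes>\<^bsub>A\<^esub> \<sigma> r" using ey by simp
    also have "\<dots> = (\<sigma> s2 \<otimes>\<^bsub>A\<^esub> \<sigma> s) \<otimes>\<^bsub>A\<^esub> (t' \<otimes>\<^bsub>A\<^esub> \<sigma> r)"
      using s2c sc t'c r by (simp add: h.S.m_assoc)
    also have "\<dots> = (\<sigma> s2 \<otimes>\<^bsub>A\<^esub> \<sigma> s) \<otimes>\<^bsub>A\<^esub> (a' \<otimes>\<^bsub>A\<^esub> (b \<otimes>\<^bsub>A\<^esub> \<sigma> w))"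
      using ta(3) by simp
    also have "\<dots> = \<sigma> s2 \<otimes>\<^bsub>A\<^esub> (\<sigma> s \<otimes>\<^bsub>A\<^esub> (a' \<otimes>\<^bsub>A\<^esub> b)) \<otimes>\<^bsub>A\<^esub> \<sigma> w"
      using s2c sc ac wc by (simp add: h.S.m_assoc)
    also have "\<dots> = \<sigma> s2 \<otimes>\<^bsub>A\<^esub> \<sigma> x \<otimes>\<^bsub>A\<^esub> \<sigma> w" using ex by simp
    also have "\<dots> = \<sigma> (s2 \<otimes>\<^bsub>R\<^esub> x \<otimes>\<^bsub>R\<^esub> w)" using s2c sx wc by simp
    finally obtain v where v: "v \<in> S" "v \<otimes>\<^bsub>R\<^esub> (y \<otimes>\<^bsub>R\<^esub> r) = v \<otimes>\<^bsub>R\<^esub> (s2 \<otimes>\<^bsub>R\<^esub> x \<otimes>\<^bsub>R\<^esub> w)"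
      using loc_eq[OF R L SR, of "y \<otimes>\<^bsub>R\<^esub> r" "s2 \<otimes>\<^bsub>R\<^esub> x \<otimes>\<^bsub>R\<^esub> w"] sy r s2c sx wc by auto
    have vc: "v \<in> carrier R" using v SR by auto
    have "\<sigma> (v \<otimes>\<^bsub>R\<^esub> y) = \<sigma> v \<otimes>\<^bsub>A\<^esub> \<sigma> y" using sy(2) vc by simp
    also have "\<dots> = \<sigma> v \<otimes>\<^bsub>A\<^esub> (\<sigma> s2 \<otimes>\<^bsub>A\<^esub> (\<sigma> s \<otimes>\<^bsub>A\<^esub> t'))" using ey by simp
    also have "\<dots> = (\<sigma> v \<otimes>\<^bsub>A\<^esub> \<sigma> s2 \<otimes>\<^bsub>A\<^esub> \<sigma> s) \<otimes>\<^bsub>A\<^esub> t'"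
      using vc s2c sc t'c by (simp add: h.S.m_assoc)
    finally have "\<sigma> (v \<otimes>\<^bsub>R\<^esub> y) = (\<sigma> v \<otimes>\<^bsub>A\<^esub> \<sigma> s2 \<otimes>\<^bsub>A\<^esub> \<sigma> s) \<otimes>\<^bsub>A\<^esub> t'" .
    moreover have "\<sigma> v \<otimes>\<^bsub>A\<^esub> \<sigma> s2 \<otimes>\<^bsub>A\<^esub> \<sigma> s \<in> Units A"
      using Su v(1) sy(1) sx(1) by (simp add: h.S.Units_m_closed)
    ultimately have "v \<otimes>\<^bsub>R\<^esub> y \<in> W" using G[of "v \<otimes>\<^bsub>R\<^esub> y"] vc sy ta by auto
    moreover have "(v \<otimes>\<^bsub>R\<^esub> y) \<otimes>\<^bsub>R\<^esub> r = (v \<otimes>\<^bsub>R\<^esub> s2 \<otimes>\<^bsub>R\<^esub> x) \<otimes>\<^bsub>R\<^esub> w"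
      using v vc sy r s2c sx wc by (simp add: h.R.m_assoc)
    moreover have "v \<otimes>\<^bsub>R\<^esub> s2 \<otimes>\<^bsub>R\<^esub> x \<in> carrier R" using vc s2c sx by simp
    ultimately show ?thesis by blast
  qed
  have Wrev: "\<exists>w'\<in>W. w' \<otimes>\<^bsub>R\<^esub> r = \<zero>\<^bsub>R\<^esub>"
    if r: "r \<in> carrier R" and w: "w \<in> W" and z: "r \<otimes>\<^bsub>R\<^esub> w = \<zero>\<^bsub>R\<^esub>" for r w
  proof -
    have wc: "w \<in> carrier R" using w WR by auto
    have "\<sigma> r \<otimes>\<^bsub>A\<^esub> \<sigma> w = \<zero>\<^bsub>A\<^esub>" using z r wc by (metis h.hom_mult h.hom_zero)
    then obtain t where t: "t \<in> T" "t \<otimes>\<^bsub>A\<^esub> \<sigma> r = \<zero>\<^bsub>A\<^esub>" using w r unfolding W_def by auto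
    have tc: "t \<in> carrier A" using t TA by auto
    obtain s y where sy: "s \<in> S" "y \<in> carrier R" "t = inv\<^bsub>A\<^esub> (\<sigma> s) \<otimes>\<^bsub>A\<^esub> \<sigma> y"
      using rep[OF tc] by auto
    have sc: "s \<in> carrier R" using sy SR by auto
    have ey: "\<sigma> s \<otimes>\<^bsub>A\<^esub> t = \<sigma> y"
      using unit_eq[of A "\<sigma> s" t "\<sigma> y"] sy Su tc h.S.monoid_axioms by auto
    have "\<sigma> (y \<otimes>\<^bsub>R\<^esub> r) = \<sigma> y \<otimes>\<^bsub>A\<^esub> \<sigma> r" using sy(2) r by simp
    also have "\<dots> = (\<sigma> s \<otimes>\<^bsub>A\<^esub> t) \<otimes>\<^bsub>A\<^esub> \<sigma> r" using ey by simp
    also have "\<dots> = \<sigma> s \<otimes>\<^bsub>A\<^esub> (t \<otimes>\<^bsub>A\<^esub> \<sigma> r)" using sc tc r by (simp add: h.S.m_assoc)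
    also have "\<dots> = \<sigma> \<zero>\<^bsub>R\<^esub>" using t sc by simp
    finally obtain v where v: "v \<in> S" "v \<otimes>\<^bsub>R\<^esub> (y \<otimes>\<^bsub>R\<^esub> r) = v \<otimes>\<^bsub>R\<^esub> \<zero>\<^bsub>R\<^esub>"
      using loc_eq[OF R L SR, of "y \<otimes>\<^bsub>R\<^esub> r" "\<zero>\<^bsub>R\<^esub>"] sy r by auto
    have vc: "v \<in> carrier R" using v SR by auto
    have "\<sigma> (v \<otimes>\<^bsub>R\<^esub> y) = \<sigma> v \<otimes>\<^bsub>A\<^esub> \<sigma> y" using sy(2) vc by simp
    also have "\<dots> = \<sigma> v \<otimes>\<^bsub>A\<^esub> (\<sigma> s \<otimes>\<^bsub>A\<^esub> t)" using ey by simp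
    also have "\<dots> = (\<sigma> v \<otimes>\<^bsub>A\<^esub> \<sigma> s) \<otimes>\<^bsub>A\<^esub> t" using vc sc tc by (simp add: h.S.m_assoc)
    finally have "\<sigma> (v \<otimes>\<^bsub>R\<^esub> y) = (\<sigma> v \<otimes>\<^bsub>A\<^esub> \<sigma> s) \<otimes>\<^bsub>A\<^esub> t" .
    moreover have "\<sigma> v \<otimes>\<^bsub>A\<^esub> \<sigma> s \<in> Units A" using Su v(1) sy(1) by (simp add: h.S.Units_m_closed)
    ultimately have "v \<otimes>\<^bsub>R\<^esub> y \<in> W" using G[of "v \<otimes>\<^bsub>R\<^esub> y"] vc sy t by auto
    moreover have "(v \<otimes>\<^bsub>R\<^esub> y) \<otimes>\<^bsub>R\<^esub> r = \<zero>\<^bsub>R\<^esub>" using v vc sy r by (simp add: h.R.m_assoc)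
    ultimately show ?thesis by blast
  qed
  have WD: "W \<in> Den_l R"
  proof -
    have "mult_closed R W" unfolding mult_closed_def using WR W1 W0 Wm by blast
    moreover have "left_ore R W" unfolding left_ore_def using calculation Wore by blast
    ultimately show ?thesis unfolding Den_l_def left_den_def using Wrev by blast
  qed
  have WS: "W = S" using Mx WD SW unfolding maximal_den_def by blast
  show ?thesis
  proof
    fix t assume t: "t \<in> T"
    have tc: "t \<in> carrier A" using t TA by auto
    obtain s r where sr: "s \<in> S" "r \<in> carrier R" "t = inv\<^bsub>A\<^esub> (\<sigma> s) \<otimes>\<^bsub>A\<^esub> \<sigma> r"
      using rep[OF tc] by auto
    have e: "\<sigma> s \<otimes>\<^bsub>A\<^esub> t = \<sigma> r"
      using unit_eq[of A "\<sigma> s" t "\<sigma> r"] sr Su tc h.S.monoid_axioms by auto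
    have "r \<in> S" using G[OF sr(2) Su[OF sr(1)] t e[symmetric]] WS by auto
    thus "t \<in> Units A" using sr Su by auto
  qed
qed


lemma zero_not_unit:
  fixes A (structure)
  assumes "ring A" "\<one> \<noteq> \<zero>"
  shows "\<zero> \<notin> Units A"
proof
  interpret ring A by fact
  assume "\<zero> \<in> Units A"
  hence "\<zero> \<otimes> inv \<zero> = \<one>" by (rule Units_r_inv)
  moreover have "\<zero> \<otimes> inv \<zero> = \<zero>" using \<open>\<zero> \<in> Units A\<close> by (intro l_null) (rule Units_inv_closed)
  ultimately show False using assms(2) by simp
qed

lemma ass_units:
  fixes A (structure)
  assumes "ring A" "T \<subseteq> Units A" "\<one> \<in> T"
  shows "ass A T = {\<zero>}"
proof -
  interpret ring A by fact
  have "r = \<zero>" if "r \<in> carrier A" "s \<in> T" "s \<otimes> r = \<zero>" for r s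
  proof -
    have su: "s \<in> Units A" using that assms(2) by blast
    have "r = (inv s \<otimes> s) \<otimes> r" using su that by simp
    also have "\<dots> = inv s \<otimes> (s \<otimes> r)" using su that by (intro m_assoc) auto
    also have "\<dots> = \<zero>" using that su by simp
    finally show ?thesis .
  qed
  moreover have "\<one> \<otimes> \<zero> = \<zero>" by simp
  ultimately show ?thesis unfolding ass_def using assms(3) by force
qed

lemma units_den:
  fixes A (structure)
  assumes "ring A" "\<one> \<noteq> \<zero>"
  shows "Units A \<in> Den_l_at A {\<zero>}"
proof -
  interpret ring A by fact
  have mc: "mult_closed A (Units A)" unfolding mult_closed_def
    using zero_not_unit[OF assms] by auto
  have ore: "\<exists>s'\<in>Units A. \<exists>r'\<in>carrier A. s' \<otimes> r = r' \<otimes> s"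
    if "r \<in> carrier A" "s \<in> Units A" for r s
  proof -
    have sc: "s \<in> carrier A" using that by blast
    have "\<one> \<otimes> r = (r \<otimes> inv s) \<otimes> s" using that sc by (simp add: m_assoc)
    moreover have "r \<otimes> inv s \<in> carrier A" using that by simp
    ultimately show ?thesis by blast
  qed
  have rev: "\<exists>t\<in>Units A. t \<otimes> r = \<zero>"
    if "r \<in> carrier A" "s \<in> Units A" "r \<otimes> s = \<zero>" for r s
  proof -
    have sc: "s \<in> carrier A" using that by blast
    have "r = r \<otimes> (s \<otimes> inv s)" using that by simp
    also have "\<dots> = (r \<otimes> s) \<otimes> inv s" using that sc by (intro m_assoc[symmetric]) auto
    also have "\<dots> = \<zero>" using that by simp
    finally have "r = \<zero>" .
    thus ?thesis using that by (intro bexI[of _ \<one>]) auto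
  qed
  have "Units A \<in> Den_l A" unfolding Den_l_def left_den_def left_ore_def using mc ore rev by blast
  moreover have "ass A (Units A) = {\<zero>}" using ass_units[OF assms(1)] by auto
  ultimately show ?thesis unfolding Den_l_at_def by blast
qed

lemma fwd:
  fixes A (structure)
  assumes A: "ring A" and nz: "\<one> \<noteq> \<zero>" and U: "\<forall>T\<in>Den_l A. T \<subseteq> Units A"
  shows "left_localization_maximal A"
proof -
  interpret ring A by fact
  have UD: "Units A \<in> Den_l_at A {\<zero>}" using units_den[OF A nz] .
  have assT: "ass A T = {\<zero>}" if "T \<in> Den_l A" for T
    using ass_units[OF A] U that unfolding Den_l_def left_den_def left_ore_def mult_closed_def by blast
  have "Ass_l A = {{\<zero>}}" unfolding Ass_l_def using assT UD unfolding Den_l_at_def by blast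
  moreover have "is_left_localization A (Units A) A id"
  proof -
    have "\<forall>a\<in>carrier A. \<exists>s\<in>Units A. \<exists>r\<in>carrier A. a = inv (id s) \<otimes> id r"
    proof
      fix a assume "a \<in> carrier A"
      thus "\<exists>s\<in>Units A. \<exists>r\<in>carrier A. a = inv (id s) \<otimes> id r"
        by (intro bexI[of _ \<one>] bexI[of _ a]) auto
    qed
    moreover have "{r \<in> carrier A. id r = \<zero>} = ass A (Units A)"
      using ass_units[OF A] by auto
    ultimately show ?thesis unfolding is_left_localization_def using A by auto
  qed
  moreover have "\<forall>T\<in>Den_l_at A {\<zero>}. T \<subseteq> Units A" using U unfolding Den_l_at_def by blast
  ultimately show ?thesis unfolding left_localization_maximal_def Ql_eq_self_def using UD by blast
qed


lemma loc_rep_mult: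
  assumes R: "ring R" and L: "is_left_localization R S A \<sigma>"
    and s: "s \<in> carrier R" "\<sigma> s \<in> Units A" and x: "x \<in> carrier R" and t: "t \<in> carrier R"
    and e: "\<sigma> t = \<sigma> x \<otimes>\<^bsub>A\<^esub> \<sigma> s" and r: "r \<in> carrier R"
  shows "\<sigma> t \<otimes>\<^bsub>A\<^esub> (inv\<^bsub>A\<^esub> (\<sigma> s) \<otimes>\<^bsub>A\<^esub> \<sigma> r) = \<sigma> (x \<otimes>\<^bsub>R\<^esub> r)"
proof -
  interpret h: ring_hom_ring R A \<sigma> using loc_hom[OF R L] .
  have "\<sigma> t \<otimes>\<^bsub>A\<^esub> (inv\<^bsub>A\<^esub> (\<sigma> s) \<otimes>\<^bsub>A\<^esub> \<sigma> r) = \<sigma> x \<otimes>\<^bsub>A\<^esub> ((\<sigma> s \<otimes>\<^bsub>A\<^esub> inv\<^bsub>A\<^esub> (\<sigma> s)) \<otimes>\<^bsub>A\<^esub> \<sigma> r)"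
    using e s x r by (simp add: h.S.m_assoc del: h.S.Units_r_inv)
  also have "\<dots> = \<sigma> (x \<otimes>\<^bsub>R\<^esub> r)" using s x r by simp
  finally show ?thesis .
qed

lemma bwd_img:
  assumes R: "ring R" and L: "is_left_localization R S A \<sigma>" and SD: "S \<in> Den_l R"
    and T: "T \<in> Den_l R" and ST: "S \<subseteq> T"
  shows "\<sigma> ` T \<in> Den_l A"
proof -
  interpret h: ring_hom_ring R A \<sigma> using loc_hom[OF R L] .
  have SR: "S \<subseteq> carrier R" using SD unfolding Den_l_def left_den_def left_ore_def mult_closed_def by auto
  have Su: "\<And>s. s \<in> S \<Longrightarrow> \<sigma> s \<in> Units A" using L unfolding is_left_localization_def by auto
  have rep: "\<And>a. a \<in> carrier A \<Longrightarrow> \<exists>s\<in>S. \<exists>r\<in>carrier R. a = inv\<^bsub>A\<^esub> (\<sigma> s) \<otimes>\<^bsub>A\<^esub> \<sigma> r"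
    using L unfolding is_left_localization_def by auto
  have TR: "T \<subseteq> carrier R" and T1: "\<one>\<^bsub>R\<^esub> \<in> T" and T0: "\<zero>\<^bsub>R\<^esub> \<notin> T"
    and Tm: "\<And>s t. s \<in> T \<Longrightarrow> t \<in> T \<Longrightarrow> s \<otimes>\<^bsub>R\<^esub> t \<in> T"
    and Tore: "\<And>a t. a \<in> carrier R \<Longrightarrow> t \<in> T \<Longrightarrow> \<exists>t'\<in>T. \<exists>a'\<in>carrier R. t' \<otimes>\<^bsub>R\<^esub> a = a' \<otimes>\<^bsub>R\<^esub> t"
    and Trev: "\<And>a t. a \<in> carrier R \<Longrightarrow> t \<in> T \<Longrightarrow> a \<otimes>\<^bsub>R\<^esub> t = \<zero>\<^bsub>R\<^esub> \<Longrightarrow> \<exists>t'\<in>T. t' \<otimes>\<^bsub>R\<^esub> a = \<zero>\<^bsub>R\<^esub>"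
    using T unfolding Den_l_def left_den_def left_ore_def mult_closed_def by blast+
  have clr: "\<exists>t'\<in>T. \<exists>x\<in>carrier R. \<sigma> t' = \<sigma> x \<otimes>\<^bsub>A\<^esub> \<sigma> s" if s: "s \<in> S" for s
  proof -
    obtain t' x where tx: "t' \<in> T" "x \<in> carrier R" "t' \<otimes>\<^bsub>R\<^esub> \<one>\<^bsub>R\<^esub> = x \<otimes>\<^bsub>R\<^esub> s"
      using Tore[of "\<one>\<^bsub>R\<^esub>" s] s ST by auto
    have "t' \<in> carrier R" "s \<in> carrier R" using tx s SR TR by auto
    hence "\<sigma> t' = \<sigma> (x \<otimes>\<^bsub>R\<^esub> s)" using tx(3) by simp
    hence "\<sigma> t' = \<sigma> x \<otimes>\<^bsub>A\<^esub> \<sigma> s" using tx(2) \<open>s \<in> carrier R\<close> by simp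
    thus ?thesis using tx by blast
  qed
  have mc: "mult_closed A (\<sigma> ` T)"
    unfolding mult_closed_def
  proof (intro conjI ballI)
    show "\<sigma> ` T \<subseteq> carrier A" using TR by auto
    show "\<one>\<^bsub>A\<^esub> \<in> \<sigma> ` T" using T1 h.hom_one by (intro image_eqI[of _ _ "\<one>\<^bsub>R\<^esub>"]) auto
    show "\<zero>\<^bsub>A\<^esub> \<notin> \<sigma> ` T"
    proof
      assume "\<zero>\<^bsub>A\<^esub> \<in> \<sigma> ` T"
      then obtain t where t: "t \<in> T" "\<sigma> t = \<sigma> \<zero>\<^bsub>R\<^esub>" by auto
      then obtain v where v: "v \<in> S" "v \<otimes>\<^bsub>R\<^esub> t = v \<otimes>\<^bsub>R\<^esub> \<zero>\<^bsub>R\<^esub>"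
        using loc_eq[OF R L SR, of t "\<zero>\<^bsub>R\<^esub>"] TR by auto
      have "v \<otimes>\<^bsub>R\<^esub> t = \<zero>\<^bsub>R\<^esub>" using v SR by auto
      moreover have "v \<otimes>\<^bsub>R\<^esub> t \<in> T" using Tm v(1) ST t(1) by auto
      ultimately show False using T0 by simp
    qed
    fix a b assume "a \<in> \<sigma> ` T" "b \<in> \<sigma> ` T"
    then obtain s t where "s \<in> T" "t \<in> T" "a = \<sigma> s" "b = \<sigma> t" by auto
    moreover have "s \<in> carrier R" "t \<in> carrier R" using calculation TR by auto
    ultimately show "a \<otimes>\<^bsub>A\<^esub> b \<in> \<sigma> ` T" using Tm by (intro image_eqI[of _ _ "s \<otimes>\<^bsub>R\<^esub> t"]) auto
  qed
  have ore: "\<exists>t'\<in>\<sigma> ` T. \<exists>a'\<in>carrier A. t' \<otimes>\<^bsub>A\<^esub> a = a' \<otimes>\<^bsub>A\<^esub> b"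
    if a: "a \<in> carrier A" and b: "b \<in> \<sigma> ` T" for a b
  proof -
    obtain t where t: "t \<in> T" "b = \<sigma> t" using b by auto
    obtain s r where sr: "s \<in> S" "r \<in> carrier R" "a = inv\<^bsub>A\<^esub> (\<sigma> s) \<otimes>\<^bsub>A\<^esub> \<sigma> r" using rep[OF a] by auto
    obtain t' x where tx: "t' \<in> T" "x \<in> carrier R" "\<sigma> t' = \<sigma> x \<otimes>\<^bsub>A\<^esub> \<sigma> s" using clr[OF sr(1)] by auto
    have e1: "\<sigma> t' \<otimes>\<^bsub>A\<^esub> a = \<sigma> (x \<otimes>\<^bsub>R\<^esub> r)"
      using loc_rep_mult[OF R L _ Su[OF sr(1)] tx(2) _ tx(3) sr(2)] sr SR tx TR by auto
    obtain t'' y where ty: "t'' \<in> T" "y \<in> carrier R" "t'' \<otimes>\<^bsub>R\<^esub> (x \<otimes>\<^bsub>R\<^esub> r) = y \<otimes>\<^bsub>R\<^esub> t"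
      using Tore[of "x \<otimes>\<^bsub>R\<^esub> r" t] tx sr t by auto
    have c: "t'' \<in> carrier R" "t' \<in> carrier R" "t \<in> carrier R" using ty tx t TR by auto
    have "\<sigma> (t'' \<otimes>\<^bsub>R\<^esub> t') \<otimes>\<^bsub>A\<^esub> a = \<sigma> t'' \<otimes>\<^bsub>A\<^esub> (\<sigma> t' \<otimes>\<^bsub>A\<^esub> a)"
      using c a by (simp add: h.S.m_assoc)
    also have "\<dots> = \<sigma> (t'' \<otimes>\<^bsub>R\<^esub> (x \<otimes>\<^bsub>R\<^esub> r))" using e1 c tx sr by simp
    also have "\<dots> = \<sigma> y \<otimes>\<^bsub>A\<^esub> b" using ty t c by simp
    finally have "\<sigma> (t'' \<otimes>\<^bsub>R\<^esub> t') \<otimes>\<^bsub>A\<^esub> a = \<sigma> y \<otimes>\<^bsub>A\<^esub> b" .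
    moreover have "\<sigma> (t'' \<otimes>\<^bsub>R\<^esub> t') \<in> \<sigma> ` T" using Tm[OF ty(1) tx(1)] by blast
    moreover have "\<sigma> y \<in> carrier A" using ty by simp
    ultimately show ?thesis by blast
  qed
  have rev: "\<exists>t'\<in>\<sigma> ` T. t' \<otimes>\<^bsub>A\<^esub> a = \<zero>\<^bsub>A\<^esub>"
    if a: "a \<in> carrier A" and b: "b \<in> \<sigma> ` T" and z: "a \<otimes>\<^bsub>A\<^esub> b = \<zero>\<^bsub>A\<^esub>" for a b
  proof -
    obtain t where t: "t \<in> T" "b = \<sigma> t" using b by auto
    have tc: "t \<in> carrier R" using t TR by auto
    obtain s r where sr: "s \<in> S" "r \<in> carrier R" "a = inv\<^bsub>A\<^esub> (\<sigma> s) \<otimes>\<^bsub>A\<^esub> \<sigma> r" using rep[OF a] by auto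
    have sc: "s \<in> carrier R" using sr SR by auto
    have es: "\<sigma> s \<otimes>\<^bsub>A\<^esub> a = \<sigma> r"
      using unit_eq[of A "\<sigma> s" a "\<sigma> r"] sr Su a h.S.monoid_axioms by auto
    have "\<sigma> (r \<otimes>\<^bsub>R\<^esub> t) = (\<sigma> s \<otimes>\<^bsub>A\<^esub> a) \<otimes>\<^bsub>A\<^esub> \<sigma> t" using es sr tc by simp
    also have "\<dots> = \<sigma> s \<otimes>\<^bsub>A\<^esub> (a \<otimes>\<^bsub>A\<^esub> \<sigma> t)" using sc a tc by (simp add: h.S.m_assoc)
    also have "\<dots> = \<sigma> \<zero>\<^bsub>R\<^esub>" using z t sc by simp
    finally obtain v where v: "v \<in> S" "v \<otimes>\<^bsub>R\<^esub> (r \<otimes>\<^bsub>R\<^esub> t) = v \<otimes>\<^bsub>R\<^esub> \<zero>\<^bsub>R\<^esub>"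
      using loc_eq[OF R L SR, of "r \<otimes>\<^bsub>R\<^esub> t" "\<zero>\<^bsub>R\<^esub>"] sr tc by auto
    have vc: "v \<in> carrier R" using v SR by auto
    have "(v \<otimes>\<^bsub>R\<^esub> r) \<otimes>\<^bsub>R\<^esub> t = \<zero>\<^bsub>R\<^esub>" using v vc sr tc by (simp add: h.R.m_assoc)
    then obtain w where w: "w \<in> T" "w \<otimes>\<^bsub>R\<^esub> (v \<otimes>\<^bsub>R\<^esub> r) = \<zero>\<^bsub>R\<^esub>"
      using Trev[of "v \<otimes>\<^bsub>R\<^esub> r" t] vc sr t by auto
    have wc: "w \<in> carrier R" using w TR by auto
    obtain t' x where tx: "t' \<in> T" "x \<in> carrier R" "\<sigma> t' = \<sigma> x \<otimes>\<^bsub>A\<^esub> \<sigma> s" using clr[OF sr(1)] by auto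
    have e1: "\<sigma> t' \<otimes>\<^bsub>A\<^esub> a = \<sigma> (x \<otimes>\<^bsub>R\<^esub> r)"
      using loc_rep_mult[OF R L _ Su[OF sr(1)] tx(2) _ tx(3) sr(2)] sr SR tx TR by auto
    have wvT: "w \<otimes>\<^bsub>R\<^esub> v \<in> T" using Tm w(1) v(1) ST by auto
    obtain t3 y where ty: "t3 \<in> T" "y \<in> carrier R" "t3 \<otimes>\<^bsub>R\<^esub> x = y \<otimes>\<^bsub>R\<^esub> (w \<otimes>\<^bsub>R\<^esub> v)"
      using Tore[OF tx(2) wvT] by auto
    have c: "t3 \<in> carrier R" "t' \<in> carrier R" using ty tx TR by auto
    have "\<sigma> (t3 \<otimes>\<^bsub>R\<^esub> t') \<otimes>\<^bsub>A\<^esub> a = \<sigma> t3 \<otimes>\<^bsub>A\<^esub> (\<sigma> t' \<otimes>\<^bsub>A\<^esub> a)"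
      using c a by (simp add: h.S.m_assoc)
    also have "\<dots> = \<sigma> ((t3 \<otimes>\<^bsub>R\<^esub> x) \<otimes>\<^bsub>R\<^esub> r)" using e1 c tx sr by (simp add: h.R.m_assoc)
    also have "\<dots> = \<sigma> (y \<otimes>\<^bsub>R\<^esub> (w \<otimes>\<^bsub>R\<^esub> (v \<otimes>\<^bsub>R\<^esub> r)))" using ty wc vc sr by (simp add: h.R.m_assoc)
    also have "\<dots> = \<zero>\<^bsub>A\<^esub>" using w ty by simp
    finally have "\<sigma> (t3 \<otimes>\<^bsub>R\<^esub> t') \<otimes>\<^bsub>A\<^esub> a = \<zero>\<^bsub>A\<^esub>" .
    moreover have "\<sigma> (t3 \<otimes>\<^bsub>R\<^esub> t') \<in> \<sigma> ` T" using Tm[OF ty(1) tx(1)] by blast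
    ultimately show ?thesis by blast
  qed
  show ?thesis unfolding Den_l_def left_den_def left_ore_def using mc ore rev by blast
qed


lemma bwd:
  assumes R: "ring R" and SD: "S \<in> Den_l R" and L: "is_left_localization R S A \<sigma>"
    and LM: "left_localization_maximal A"
  shows "max_left_quotient_ring R A \<sigma>"
proof -
  interpret h: ring_hom_ring R A \<sigma> using loc_hom[OF R L] .
  have mcS: "mult_closed R S" using SD unfolding Den_l_def left_den_def left_ore_def by auto
  have SR: "S \<subseteq> carrier R" using mcS unfolding mult_closed_def by auto
  have Su: "\<And>s. s \<in> S \<Longrightarrow> \<sigma> s \<in> Units A" using L unfolding is_left_localization_def by auto
  have rep: "\<And>a. a \<in> carrier A \<Longrightarrow> \<exists>s\<in>S. \<exists>r\<in>carrier R. a = inv\<^bsub>A\<^esub> (\<sigma> s) \<otimes>\<^bsub>A\<^esub> \<sigma> r"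
    using L unfolding is_left_localization_def by auto
  have nz: "\<one>\<^bsub>A\<^esub> \<noteq> \<zero>\<^bsub>A\<^esub>" using loc_nonzero[OF R L mcS] .
  obtain S0 where S0: "\<forall>T\<in>Den_l_at A {\<zero>\<^bsub>A\<^esub>}. T \<subseteq> S0" "is_left_localization A S0 A id"
    using LM unfolding left_localization_maximal_def Ql_eq_self_def by blast
  have S0u: "S0 \<subseteq> Units A" using S0(2) unfolding is_left_localization_def by auto
  have assA: "\<And>T. T \<in> Den_l A \<Longrightarrow> ass A T = {\<zero>\<^bsub>A\<^esub>}"
    using LM unfolding left_localization_maximal_def Ass_l_def by (metis image_eqI singletonD)
  define Sm where "Sm = {r \<in> carrier R. \<sigma> r \<in> Units A}"
  have SSm: "S \<subseteq> Sm" unfolding Sm_def using SR Su by auto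
  have Sm0: "\<zero>\<^bsub>R\<^esub> \<notin> Sm" unfolding Sm_def using zero_not_unit[OF h.S.ring_axioms nz] by auto
  have mc: "mult_closed R Sm" unfolding mult_closed_def
    using Sm0 by (auto simp: Sm_def)
  have ore: "\<exists>s'\<in>Sm. \<exists>r'\<in>carrier R. s' \<otimes>\<^bsub>R\<^esub> r = r' \<otimes>\<^bsub>R\<^esub> s"
    if r: "r \<in> carrier R" and s: "s \<in> Sm" for r s
  proof -
    have sc: "s \<in> carrier R" and su: "\<sigma> s \<in> Units A" using s unfolding Sm_def by auto
    define a where "a = \<sigma> r \<otimes>\<^bsub>A\<^esub> inv\<^bsub>A\<^esub> (\<sigma> s)"
    have ac: "a \<in> carrier A" unfolding a_def using r su by simp
    have ra: "\<sigma> r = a \<otimes>\<^bsub>A\<^esub> \<sigma> s"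
    proof -
      have "a \<otimes>\<^bsub>A\<^esub> \<sigma> s = \<sigma> r \<otimes>\<^bsub>A\<^esub> (inv\<^bsub>A\<^esub> (\<sigma> s) \<otimes>\<^bsub>A\<^esub> \<sigma> s)"
        unfolding a_def using r su sc by (intro h.S.m_assoc) auto
      thus ?thesis using su r by simp
    qed
    obtain t u where tu: "t \<in> S" "u \<in> carrier R" "a = inv\<^bsub>A\<^esub> (\<sigma> t) \<otimes>\<^bsub>A\<^esub> \<sigma> u" using rep[OF ac] by auto
    have tc: "t \<in> carrier R" using tu SR by auto
    have et: "\<sigma> t \<otimes>\<^bsub>A\<^esub> a = \<sigma> u"
      using unit_eq[of A "\<sigma> t" a "\<sigma> u"] tu Su ac h.S.monoid_axioms by auto
    have "\<sigma> (t \<otimes>\<^bsub>R\<^esub> r) = \<sigma> t \<otimes>\<^bsub>A\<^esub> (a \<otimes>\<^bsub>A\<^esub> \<sigma> s)" using tc r ra by simp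
    also have "\<dots> = (\<sigma> t \<otimes>\<^bsub>A\<^esub> a) \<otimes>\<^bsub>A\<^esub> \<sigma> s" using tc ac sc by (simp add: h.S.m_assoc)
    also have "\<dots> = \<sigma> (u \<otimes>\<^bsub>R\<^esub> s)" using et tu sc by simp
    finally obtain v where v: "v \<in> S" "v \<otimes>\<^bsub>R\<^esub> (t \<otimes>\<^bsub>R\<^esub> r) = v \<otimes>\<^bsub>R\<^esub> (u \<otimes>\<^bsub>R\<^esub> s)"
      using loc_eq[OF R L SR, of "t \<otimes>\<^bsub>R\<^esub> r" "u \<otimes>\<^bsub>R\<^esub> s"] tc r tu sc by auto
    have vc: "v \<in> carrier R" using v SR by auto
    have "(v \<otimes>\<^bsub>R\<^esub> t) \<otimes>\<^bsub>R\<^esub> r = (v \<otimes>\<^bsub>R\<^esub> u) \<otimes>\<^bsub>R\<^esub> s" using v vc tc r tu sc by (simp add: h.R.m_assoc)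
    moreover have "v \<otimes>\<^bsub>R\<^esub> t \<in> Sm" unfolding Sm_def using vc tc Su v(1) tu(1) by simp
    moreover have "v \<otimes>\<^bsub>R\<^esub> u \<in> carrier R" using vc tu by simp
    ultimately show ?thesis by blast
  qed
  have kerS: "\<exists>v\<in>S. v \<otimes>\<^bsub>R\<^esub> r = \<zero>\<^bsub>R\<^esub>" if r: "r \<in> carrier R" "\<sigma> r = \<zero>\<^bsub>A\<^esub>" for r
  proof -
    obtain v where "v \<in> S" "v \<otimes>\<^bsub>R\<^esub> r = v \<otimes>\<^bsub>R\<^esub> \<zero>\<^bsub>R\<^esub>"
      using loc_eq[OF R L SR, of r "\<zero>\<^bsub>R\<^esub>"] r by auto
    moreover have "v \<in> carrier R" using calculation SR by blast
    ultimately show ?thesis by (intro bexI[of _ v]) simp_all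
  qed
  have rev: "\<exists>t\<in>Sm. t \<otimes>\<^bsub>R\<^esub> r = \<zero>\<^bsub>R\<^esub>"
    if r: "r \<in> carrier R" and s: "s \<in> Sm" and z: "r \<otimes>\<^bsub>R\<^esub> s = \<zero>\<^bsub>R\<^esub>" for r s
  proof -
    have sc: "s \<in> carrier R" and su: "\<sigma> s \<in> Units A" using s unfolding Sm_def by auto
    have "\<sigma> r = \<sigma> r \<otimes>\<^bsub>A\<^esub> (\<sigma> s \<otimes>\<^bsub>A\<^esub> inv\<^bsub>A\<^esub> (\<sigma> s))" using r su by simp
    also have "\<dots> = \<sigma> (r \<otimes>\<^bsub>R\<^esub> s) \<otimes>\<^bsub>A\<^esub> inv\<^bsub>A\<^esub> (\<sigma> s)" using r sc su by (simp add: h.S.m_assoc)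
    also have "\<dots> = \<zero>\<^bsub>A\<^esub>" using z su by simp
    finally show ?thesis using kerS[OF r] SSm by blast
  qed
  have SmD: "Sm \<in> Den_l R" unfolding Den_l_def left_den_def left_ore_def using mc ore rev by blast
  have L2: "is_left_localization R Sm A \<sigma>"
  proof -
    have "\<forall>a\<in>carrier A. \<exists>s\<in>Sm. \<exists>r\<in>carrier R. a = inv\<^bsub>A\<^esub> (\<sigma> s) \<otimes>\<^bsub>A\<^esub> \<sigma> r"
      using rep SSm by blast
    moreover have "{r \<in> carrier R. \<sigma> r = \<zero>\<^bsub>A\<^esub>} = ass R Sm"
    proof
      show "{r \<in> carrier R. \<sigma> r = \<zero>\<^bsub>A\<^esub>} \<subseteq> ass R Sm"
        unfolding ass_def using kerS SSm by blast
      show "ass R Sm \<subseteq> {r \<in> carrier R. \<sigma> r = \<zero>\<^bsub>A\<^esub>}"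
      proof
        fix r assume "r \<in> ass R Sm"
        then obtain s where rs: "r \<in> carrier R" "s \<in> Sm" "s \<otimes>\<^bsub>R\<^esub> r = \<zero>\<^bsub>R\<^esub>" unfolding ass_def by auto
        have sc: "s \<in> carrier R" and su: "\<sigma> s \<in> Units A" using rs unfolding Sm_def by auto
        have "\<sigma> r = (inv\<^bsub>A\<^esub> (\<sigma> s) \<otimes>\<^bsub>A\<^esub> \<sigma> s) \<otimes>\<^bsub>A\<^esub> \<sigma> r" using rs su by simp
        also have "\<dots> = inv\<^bsub>A\<^esub> (\<sigma> s) \<otimes>\<^bsub>A\<^esub> (\<sigma> s \<otimes>\<^bsub>A\<^esub> \<sigma> r)"
          using rs(1) sc su by (intro h.S.m_assoc) auto
        also have "\<dots> = inv\<^bsub>A\<^esub> (\<sigma> s) \<otimes>\<^bsub>A\<^esub> \<sigma> (s \<otimes>\<^bsub>R\<^esub> r)" using rs(1) sc by simp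
        also have "\<dots> = \<zero>\<^bsub>A\<^esub>" using rs su by simp
        finally show "r \<in> {r \<in> carrier R. \<sigma> r = \<zero>\<^bsub>A\<^esub>}" using rs by simp
      qed
    qed
    ultimately show ?thesis using L unfolding is_left_localization_def Sm_def by auto
  qed
  have mx: "T = Sm" if T: "T \<in> Den_l R" and ST: "Sm \<subseteq> T" for T
  proof
    show "Sm \<subseteq> T" by fact
    have TR: "T \<subseteq> carrier R" using T unfolding Den_l_def left_den_def left_ore_def mult_closed_def by auto
    have im: "\<sigma> ` T \<in> Den_l A" using bwd_img[OF R L SD T] SSm ST by auto
    hence "\<sigma> ` T \<in> Den_l_at A {\<zero>\<^bsub>A\<^esub>}" unfolding Den_l_at_def using assA by blast
    hence "\<sigma> ` T \<subseteq> Units A" using S0(1) S0u by blast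
    thus "T \<subseteq> Sm" unfolding Sm_def using TR by auto
  qed
  have "maximal_den R Sm" unfolding maximal_den_def using SmD mx by blast
  thus ?thesis unfolding max_left_quotient_ring_def using L2 by blast
qed

theorem theorem3p11:
  fixes R :: "('a, 'm) ring_scheme" and A :: "('b, 'n) ring_scheme"
    and \<sigma> :: "'a \<Rightarrow> 'b" and S' :: "'a set" and \<aa> :: "'a set"
  assumes "ring R"
    and "\<aa> \<in> Ass_l R"
    and "S' \<in> Den_l_at R \<aa>"
    and "is_left_localization R S' A \<sigma>"
  shows "max_left_quotient_ring R A \<sigma> \<longleftrightarrow> left_localization_maximal A"
proof
  assume "max_left_quotient_ring R A \<sigma>"
  then obtain S where S: "maximal_den R S" "is_left_localization R S A \<sigma>"
    unfolding max_left_quotient_ring_def by blast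
  have mcS: "mult_closed R S" using S(1)
    unfolding maximal_den_def Den_l_def left_den_def left_ore_def by auto
  have A: "ring A" using S(2) unfolding is_left_localization_def by auto
  show "left_localization_maximal A"
    using fwd[OF A loc_nonzero[OF assms(1) S(2) mcS]] fwd_units[OF assms(1) S] by blast
next
  assume "left_localization_maximal A"
  moreover have "S' \<in> Den_l R" using assms(3) unfolding Den_l_at_def by auto
  ultimately show "max_left_quotient_ring R A \<sigma>" using bwd assms(1,4) by blast
qed

end
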